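(* Let $(\Omega,\sqsubseteq)$ be a poset and $\mathcal{A}:\Omega\to\wp(\Omega)$ satisfy awareness persistence (if $\omega'\sqsubseteq\omega$ then $\mathcal{A}(\omega)\subseteq\mathcal{A}(\omega')$) and awareness refinability (if $\nu\notin\mathcal{A}(\omega)$ then there is $\omega'\sqsubseteq\omega$ such that $\nu\notin\mathcal{A}(\omega'')$ for all $\omega''\sqsubseteq\omega'$). Then for any $E\in\mathcal{RO}(\Omega,\sqsubseteq)$, we have $\mathbf{A}(E)\in\mathcal{RO}(\Omega,\sqsubseteq)$, where $\omega\in\mathbf{A}(E)$ iff for all $\omega'\sqsubseteq\omega$ and all $\nu\in\mathcal{A}(\omega')$, $\max(E\cap\downarrow\nu)\cup\max(\neg E\cap\downarrow\nu)\subseteq\mathcal{A}(\omega')$.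
   Context: $\downarrow E=\{\omega\mid\omega\sqsubseteq\nu\text{ for some }\nu\in E\}$, $\downarrow\nu=\downarrow\{\nu\}$; $\rho(E)=\{\omega\mid\forall\omega'\sqsubseteq\omega\ \exists\omega''\sqsubseteq\omega'\colon\omega''\in\downarrow E\}$; $\mathcal{RO}(\Omega,\sqsubseteq)=\{E\subseteq\Omega\mid\rho(E)=E\}$ (the regular open sets); $\neg E=\{\omega\mid\forall\omega'\sqsubseteq\omega,\ \omega'\notin E\}$; $\max(E)=\{\omega\in E\mid\text{there is no }\nu\in E\text{ with }\omega\sqsubseteq\nu\text{ and }\nu\not\sqsubseteq\omega\}$. *)

theory Defs
  imports Main
begin

definition down :: "('w \<Rightarrow> 'w \<Rightarrow> bool) \<Rightarrow> 'w set \<Rightarrow> 'w set" where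
  "down le E = {w. \<exists>v\<in>E. le w v}"

definition rho :: "('w \<Rightarrow> 'w \<Rightarrow> bool) \<Rightarrow> 'w set \<Rightarrow> 'w set" where
  "rho le E = {w. \<forall>w'. le w' w \<longrightarrow> (\<exists>w''. le w'' w' \<and> w'' \<in> down le E)}"

definition RO :: "('w \<Rightarrow> 'w \<Rightarrow> bool) \<Rightarrow> 'w set set" where
  "RO le = {E. rho le E = E}"

definition neg :: "('w \<Rightarrow> 'w \<Rightarrow> bool) \<Rightarrow> 'w set \<Rightarrow> 'w set" where
  "neg le E = {w. \<forall>w'. le w' w \<longrightarrow> w' \<notin> E}"

definition maxs :: "('w \<Rightarrow> 'w \<Rightarrow> bool) \<Rightarrow> 'w set \<Rightarrow> 'w set" where
  "maxs le E = {w\<in>E. \<not> (\<exists>v\<in>E. le w v \<and> \<not> le v w)}"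

definition awareness_persistence :: "('w \<Rightarrow> 'w \<Rightarrow> bool) \<Rightarrow> ('w \<Rightarrow> 'w set) \<Rightarrow> bool" where
  "awareness_persistence le Aw \<longleftrightarrow> (\<forall>w w'. le w' w \<longrightarrow> Aw w \<subseteq> Aw w')"

definition awareness_refinability :: "('w \<Rightarrow> 'w \<Rightarrow> bool) \<Rightarrow> ('w \<Rightarrow> 'w set) \<Rightarrow> bool" where
  "awareness_refinability le Aw \<longleftrightarrow>
     (\<forall>v w. v \<notin> Aw w \<longrightarrow> (\<exists>w'. le w' w \<and> (\<forall>w''. le w'' w' \<longrightarrow> v \<notin> Aw w'')))"

definition aware_op :: "('w \<Rightarrow> 'w \<Rightarrow> bool) \<Rightarrow> ('w \<Rightarrow> 'w set) \<Rightarrow> 'w set \<Rightarrow> 'w set" where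
  "aware_op le Aw E = {w. \<forall>w'. le w' w \<longrightarrow> (\<forall>v\<in>Aw w'.
      maxs le (E \<inter> down le {v}) \<union> maxs le (neg le E \<inter> down le {v}) \<subseteq> Aw w')}"

end

theory Submission
  imports Defs
begin

theorem lemma3p4:
  fixes le :: "'w \<Rightarrow> 'w \<Rightarrow> bool" and Aw :: "'w \<Rightarrow> 'w set" and E :: "'w set"
  assumes "class.order le (\<lambda>x y. le x y \<and> \<not> le y x)"
    and "awareness_persistence le Aw"
    and "awareness_refinability le Aw"
    and "E \<in> RO le"
  shows "aware_op le Aw E \<in> RO le"
proof -
  have refl: "\<And>x. le x x" using assms(1) unfolding class.order_def class.preorder_def by blast
  have trans: "\<And>x y z. le x y \<Longrightarrow> le y z \<Longrightarrow> le x z"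
    using assms(1) unfolding class.order_def class.preorder_def by blast
  let ?A = "aware_op le Aw E"
  have dc: "\<And>x y. y \<in> ?A \<Longrightarrow> le x y \<Longrightarrow> x \<in> ?A"
    unfolding aware_op_def using trans by blast
  have dn: "down le ?A = ?A"
    unfolding down_def using dc refl by blast
  have "rho le ?A = ?A"
  proof
    show "?A \<subseteq> rho le ?A"
      unfolding rho_def dn using dc refl by blast
  next
    show "rho le ?A \<subseteq> ?A"
    proof
      fix w assume w: "w \<in> rho le ?A"
      show "w \<in> ?A"
      proof (rule ccontr)
        assume "w \<notin> ?A"
        then obtain w' v u where w': "le w' w" and v: "v \<in> Aw w'"
          and u: "u \<in> maxs le (E \<inter> down le {v}) \<union> maxs le (neg le E \<inter> down le {v})"
          and nu: "u \<notin> Aw w'"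
          unfolding aware_op_def by blast
        obtain w1 where w1: "le w1 w'" and w1u: "\<And>w''. le w'' w1 \<Longrightarrow> u \<notin> Aw w''"
          using assms(3) nu unfolding awareness_refinability_def by blast
        have "le w1 w" using trans w1 w' by blast
        then obtain w2 where w2: "le w2 w1" "w2 \<in> ?A"
          using w unfolding rho_def dn by blast
        have "v \<in> Aw w2" using assms(2) v trans[OF w2(1) w1]
          unfolding awareness_persistence_def by blast
        then have "u \<in> Aw w2" using w2(2) u refl unfolding aware_op_def by blast
        then show False using w1u w2(1) by blast
      qed
    qed
  qed
  then show ?thesis unfolding RO_def by blast
qed

end
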